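(* Consider the program $\mathsf{P}$ of $\mathcal{H}$ consisting of the four clauses $\mathsf{s}\,\mathsf{Q}\leftarrow\mathsf{Q}\,(\mathsf{s}\,\mathsf{Q})$; $\mathsf{p}\,\mathsf{R}\leftarrow\mathsf{R}$; $\mathsf{q}\,\mathsf{R}\leftarrow\,\sim(\mathsf{w}\,\mathsf{R})$; $\mathsf{w}\,\mathsf{R}\leftarrow\,\sim\mathsf{R}$, where $\mathsf{Q}$ is a predicate variable of type $o\to o$, $\mathsf{R}$ is a predicate variable of type $o$, $\mathsf{p},\mathsf{q},\mathsf{w}$ are predicate constants of type $o\to o$ and $\mathsf{s}$ is a predicate constant of type $(o\to o)\to o$. Then the Herbrand interpretation $\mathcal{M}_\mathsf{P}$ of $\mathsf{P}$ (whose valuation function is the well-founded model of $\mathsf{Gr(P)}$) is not extensional.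
   Context: Types of $\mathcal{H}$: base types $\iota,o$; predicate types $\pi ::= o\mid\rho\to\pi$; argument types $\rho::=\iota\mid\pi$. Terms are built from variables, constants and function symbols by typed application; atoms are terms of type $o$; literals are atoms, equalities between terms of type $\iota$, and negated atoms $\sim\mathsf{E}$. For a program $\mathsf{P}$, $U_{\mathsf{P},\rho}$ is the set of ground terms of argument type $\rho$ built from the constants and function symbols occurring in $\mathsf{P}$. The ground instantiation $\mathsf{Gr(P)}$ is the set of all clauses obtained from clauses of $\mathsf{P}$ by replacing every variable by an element of $U_{\mathsf{P},\rho}$ of the same type; it is regarded as a (possibly infinite) propositional program with the ground atoms as propositional variables (ground equalities being the constants true/false according to syntactic identity). The well-founded model of $\mathsf{Gr(P)}$ is the usual (three-valued, values $\mathit{false},0,\mathit{true}$) well-founded model of this propositional program. $\mathcal{M}_\mathsf{P}$ is the Herbrand interpretation of $\mathsf{P}$ (symbols interpreted by themselves, application syntactic) whose valuation $v$ assigns to each ground atom its value in the well-founded model of $\mathsf{Gr(P)}$, with $v(\sim\mathsf{E})$ swapping $\mathit{true}/\mathit{false}$ and fixing $0$. Extensional equality: for a valuation $v$ and argument type $\rho$, the relation $\cong_{v,\rho}$ on $U_{\mathsf{P},\rho}$ is defined by: for $\rho=\iota$, $d\cong d'$ iff $d=d'$; for $\rho=o$, $d\cong d'$ iff $v(d)=v(d')$; for $\rho=\rho'\to\pi$, $d\cong_{v,\rho}d'$ iff $(d\,e)\cong_{v,\pi}(d'\,e')$ for all $e,e'\in U_{\mathsf{P},\rho'}$ with $e\cong_{v,\rho'}e'$.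 A Herbrand interpretation $I$ with valuation $v_I$ is extensional if for every argument type $\rho$ the relation $\cong_{v_I,\rho}$ is reflexive, i.e. $\mathsf{E}\cong_{v_I,\rho}\mathsf{E}$ for all $\mathsf{E}\in U_{\mathsf{P},\rho}$. *)

theory Defs
  imports Main
begin

datatype ty = Iota | Omic | Arrow ty ty

inductive pred_ty :: "ty \<Rightarrow> bool" and arg_ty :: "ty \<Rightarrow> bool" where
  "pred_ty Omic"
| "arg_ty r \<Longrightarrow> pred_ty p \<Longrightarrow> pred_ty (Arrow r p)"
| "arg_ty Iota"
| "pred_ty p \<Longrightarrow> arg_ty p"

datatype hterm = Var string ty | Con string ty | App hterm hterm

datatype lit = Pos hterm | Neg hterm | Eq hterm hterm

type_synonym clause = "hterm \<times> lit list"   (* head <- body *)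
type_synonym program = "clause set"

fun cons_of :: "hterm \<Rightarrow> (string \<times> ty) set" where
  "cons_of (Var x t) = {}"
| "cons_of (Con c t) = {(c, t)}"
| "cons_of (App a b) = cons_of a \<union> cons_of b"

fun vars_of :: "hterm \<Rightarrow> (string \<times> ty) set" where
  "vars_of (Var x t) = {(x, t)}"
| "vars_of (Con c t) = {}"
| "vars_of (App a b) = vars_of a \<union> vars_of b"

fun lit_terms :: "lit \<Rightarrow> hterm set" where
  "lit_terms (Pos a) = {a}"
| "lit_terms (Neg a) = {a}"
| "lit_terms (Eq a b) = {a, b}"

definition clause_terms :: "clause \<Rightarrow> hterm set" where
  "clause_terms c = insert (fst c) (\<Union>l\<in>set (snd c). lit_terms l)"

definition prog_syms :: "program \<Rightarrow> (string \<times> ty) set" where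
  "prog_syms P = (\<Union>c\<in>P. \<Union>t\<in>clause_terms c. cons_of t)"

definition clause_vars :: "clause \<Rightarrow> (string \<times> ty) set" where
  "clause_vars c = (\<Union>t\<in>clause_terms c. vars_of t)"

inductive ground_of :: "program \<Rightarrow> hterm \<Rightarrow> ty \<Rightarrow> bool" for P where
  "(c, t) \<in> prog_syms P \<Longrightarrow> ground_of P (Con c t) t"
| "ground_of P f (Arrow a b) \<Longrightarrow> ground_of P e a \<Longrightarrow> ground_of P (App f e) b"

definition U :: "program \<Rightarrow> ty \<Rightarrow> hterm set" where
  "U P r = {t. ground_of P t r}"

fun subst :: "(string \<times> ty \<Rightarrow> hterm) \<Rightarrow> hterm \<Rightarrow> hterm" where
  "subst \<theta> (Var x t) = \<theta> (x, t)"
| "subst \<theta> (Con c t) = Con c t"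
| "subst \<theta> (App a b) = App (subst \<theta> a) (subst \<theta> b)"

fun subst_lit :: "(string \<times> ty \<Rightarrow> hterm) \<Rightarrow> lit \<Rightarrow> lit" where
  "subst_lit \<theta> (Pos a) = Pos (subst \<theta> a)"
| "subst_lit \<theta> (Neg a) = Neg (subst \<theta> a)"
| "subst_lit \<theta> (Eq a b) = Eq (subst \<theta> a) (subst \<theta> b)"

definition Gr :: "program \<Rightarrow> clause set" where
  "Gr P = {(subst \<theta> h, map (subst_lit \<theta>) b) | h b \<theta>.
             (h, b) \<in> P \<and> (\<forall>(x, t) \<in> clause_vars (h, b). \<theta> (x, t) \<in> U P t)}"

text \<open>Ground atoms are the propositional variables; a ground equality is true iff
  both sides are syntactically identical.  \<open>GL G J\<close> is the least model of the
  Gelfond--Lifschitz reduct of G w.r.t. the two-valued interpretation J.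
  The well-founded model is obtained by Van Gelder's alternating fixpoint:
  true atoms = lfp (GL\<circ>GL), non-false atoms = GL (lfp (GL\<circ>GL)).\<close>

definition GL :: "clause set \<Rightarrow> hterm set \<Rightarrow> hterm set" where
  "GL G J = lfp (\<lambda>I. {h. \<exists>b. (h, b) \<in> G \<and>
      (\<forall>l\<in>set b. case l of Pos a \<Rightarrow> a \<in> I | Neg a \<Rightarrow> a \<notin> J | Eq s t \<Rightarrow> s = t)})"

definition wf_true :: "clause set \<Rightarrow> hterm set" where
  "wf_true G = lfp (\<lambda>J. GL G (GL G J))"

definition wf_nonfalse :: "clause set \<Rightarrow> hterm set" where
  "wf_nonfalse G = GL G (wf_true G)"

datatype tv = FalseV | ZeroV | TrueV

definition wf_val :: "clause set \<Rightarrow> hterm \<Rightarrow> tv" where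
  "wf_val G a = (if a \<in> wf_true G then TrueV
                 else if a \<notin> wf_nonfalse G then FalseV else ZeroV)"

definition MP_val :: "program \<Rightarrow> hterm \<Rightarrow> tv" where
  "MP_val P = wf_val (Gr P)"

fun ext_eq :: "program \<Rightarrow> (hterm \<Rightarrow> tv) \<Rightarrow> ty \<Rightarrow> hterm \<Rightarrow> hterm \<Rightarrow> bool" where
  "ext_eq P v Iota d d' = (d = d')"
| "ext_eq P v Omic d d' = (v d = v d')"
| "ext_eq P v (Arrow r p) d d' =
     (\<forall>e e'. e \<in> U P r \<longrightarrow> e' \<in> U P r \<longrightarrow> ext_eq P v r e e' \<longrightarrow>
             ext_eq P v p (App d e) (App d' e'))"

definition extensional :: "program \<Rightarrow> (hterm \<Rightarrow> tv) \<Rightarrow> bool" where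
  "extensional P v = (\<forall>r. arg_ty r \<longrightarrow> (\<forall>E \<in> U P r. ext_eq P v r E E))"

abbreviation "oo \<equiv> Arrow Omic Omic"

definition ex_prog :: program where
  "ex_prog = {
     (App (Con ''s'' (Arrow oo Omic)) (Var ''Q'' oo),
        [Pos (App (Var ''Q'' oo) (App (Con ''s'' (Arrow oo Omic)) (Var ''Q'' oo)))]),
     (App (Con ''p'' oo) (Var ''R'' Omic), [Pos (Var ''R'' Omic)]),
     (App (Con ''q'' oo) (Var ''R'' Omic), [Neg (App (Con ''w'' oo) (Var ''R'' Omic))]),
     (App (Con ''w'' oo) (Var ''R'' Omic), [Neg (Var ''R'' Omic)]) }"

end

theory Submission
  imports Defs
begin

abbreviation "sC \<equiv> Con ''s'' (Arrow oo Omic)"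
abbreviation "pC \<equiv> Con ''p'' oo"
abbreviation "qC \<equiv> Con ''q'' oo"
abbreviation "wC \<equiv> Con ''w'' oo"

definition FF :: "clause set \<Rightarrow> hterm set \<Rightarrow> hterm set \<Rightarrow> hterm set" where
  "FF G J = (\<lambda>I. {h. \<exists>b. (h, b) \<in> G \<and>
      (\<forall>l\<in>set b. case l of Pos a \<Rightarrow> a \<in> I | Neg a \<Rightarrow> a \<notin> J | Eq s t \<Rightarrow> s = t)})"

lemma FF_mono: "mono (FF G J)"
  unfolding FF_def mono_def
  apply auto
  subgoal for A B x b
    apply (rule exI[of _ b])
    apply (auto split: lit.splits)
    done
  done

lemma GL_FF: "GL G J = lfp (FF G J)"
  unfolding GL_def FF_def by simp

lemma GL_unfold: "GL G J = FF G J (GL G J)"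
  unfolding GL_FF using FF_mono lfp_unfold by blast

lemma GL_lower: "FF G J S \<subseteq> S \<Longrightarrow> GL G J \<subseteq> S"
  unfolding GL_FF by (rule lfp_lowerbound)

lemma GL_anti: "J \<subseteq> J' \<Longrightarrow> GL G J' \<subseteq> GL G J"
  unfolding GL_FF
  apply (rule lfp_mono)
  unfolding FF_def
  apply auto
  subgoal for Z x b
    apply (rule exI[of _ b])
    apply (auto split: lit.splits)
    done
  done

lemma GLGL_mono: "mono (\<lambda>J. GL G (GL G J))"
  unfolding mono_def by (meson GL_anti)

lemma wf_true_unfold: "wf_true G = GL G (wf_nonfalse G)"
  unfolding wf_true_def wf_nonfalse_def
  using lfp_unfold[OF GLGL_mono] by metis

lemma wf_true_lower: "GL G (GL G S) \<subseteq> S \<Longrightarrow> wf_true G \<subseteq> S"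
  unfolding wf_true_def by (rule lfp_lowerbound)

lemma syms: "(''s'', Arrow oo Omic) \<in> prog_syms ex_prog" "(''p'', oo) \<in> prog_syms ex_prog"
  "(''q'', oo) \<in> prog_syms ex_prog" "(''w'', oo) \<in> prog_syms ex_prog"
  unfolding prog_syms_def ex_prog_def clause_terms_def by auto

lemma inU: "sC \<in> U ex_prog (Arrow oo Omic)" "pC \<in> U ex_prog oo" "qC \<in> U ex_prog oo"
  "wC \<in> U ex_prog oo"
  unfolding U_def using syms by (auto intro: ground_of.intros)

lemma UO_app: "f \<in> U ex_prog (Arrow a b) \<Longrightarrow> e \<in> U ex_prog a \<Longrightarrow> App f e \<in> U ex_prog b"
  unfolding U_def by (auto intro: ground_of.intros)

lemma Gr_char: "(h, b) \<in> Gr ex_prog \<longleftrightarrow>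
   (\<exists>Q. Q \<in> U ex_prog oo \<and> h = App sC Q \<and> b = [Pos (App Q (App sC Q))]) \<or>
   (\<exists>t. t \<in> U ex_prog Omic \<and> h = App pC t \<and> b = [Pos t]) \<or>
   (\<exists>t. t \<in> U ex_prog Omic \<and> h = App qC t \<and> b = [Neg (App wC t)]) \<or>
   (\<exists>t. t \<in> U ex_prog Omic \<and> h = App wC t \<and> b = [Neg t])"
proof
  assume "(h, b) \<in> Gr ex_prog"
  then show "(\<exists>Q. Q \<in> U ex_prog oo \<and> h = App sC Q \<and> b = [Pos (App Q (App sC Q))]) \<or>
   (\<exists>t. t \<in> U ex_prog Omic \<and> h = App pC t \<and> b = [Pos t]) \<or>
   (\<exists>t. t \<in> U ex_prog Omic \<and> h = App qC t \<and> b = [Neg (App wC t)]) \<or>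
   (\<exists>t. t \<in> U ex_prog Omic \<and> h = App wC t \<and> b = [Neg t])"
    unfolding Gr_def ex_prog_def clause_vars_def clause_terms_def by auto
next
  assume "(\<exists>Q. Q \<in> U ex_prog oo \<and> h = App sC Q \<and> b = [Pos (App Q (App sC Q))]) \<or>
   (\<exists>t. t \<in> U ex_prog Omic \<and> h = App pC t \<and> b = [Pos t]) \<or>
   (\<exists>t. t \<in> U ex_prog Omic \<and> h = App qC t \<and> b = [Neg (App wC t)]) \<or>
   (\<exists>t. t \<in> U ex_prog Omic \<and> h = App wC t \<and> b = [Neg t])"
  then show "(h, b) \<in> Gr ex_prog"
  proof (elim disjE exE conjE)
    fix Q assume "Q \<in> U ex_prog oo" "h = App sC Q" "b = [Pos (App Q (App sC Q))]"
    then show ?thesis unfolding Gr_def ex_prog_def clause_vars_def clause_terms_def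
      by (intro CollectI exI[of _ "App sC (Var ''Q'' oo)"] exI[of _ "\<lambda>_. Q"]) auto
  next
    fix t assume "t \<in> U ex_prog Omic" "h = App pC t" "b = [Pos t]"
    then show ?thesis unfolding Gr_def ex_prog_def clause_vars_def clause_terms_def
      by (intro CollectI exI[of _ "App pC (Var ''R'' Omic)"] exI[of _ "\<lambda>_. t"]) auto
  next
    fix t assume "t \<in> U ex_prog Omic" "h = App qC t" "b = [Neg (App wC t)]"
    then show ?thesis unfolding Gr_def ex_prog_def clause_vars_def clause_terms_def
      by (intro CollectI exI[of _ "App qC (Var ''R'' Omic)"] exI[of _ "\<lambda>_. t"]) auto
  next
    fix t assume "t \<in> U ex_prog Omic" "h = App wC t" "b = [Neg t]"
    then show ?thesis unfolding Gr_def ex_prog_def clause_vars_def clause_terms_def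
      by (intro CollectI exI[of _ "App wC (Var ''R'' Omic)"] exI[of _ "\<lambda>_. t"]) auto
  qed
qed


abbreviation "GG \<equiv> Gr ex_prog"

lemma memL: "x \<in> GL GG J \<longleftrightarrow> x \<in> FF GG J (GL GG J)"
  using GL_unfold by blast

lemma memF: "x \<in> FF GG J I \<longleftrightarrow>
   (\<exists>Q. Q \<in> U ex_prog oo \<and> x = App sC Q \<and> App Q (App sC Q) \<in> I) \<or>
   (\<exists>t. t \<in> U ex_prog Omic \<and> x = App pC t \<and> t \<in> I) \<or>
   (\<exists>t. t \<in> U ex_prog Omic \<and> x = App qC t \<and> App wC t \<notin> J) \<or>
   (\<exists>t. t \<in> U ex_prog Omic \<and> x = App wC t \<and> t \<notin> J)"
  unfolding FF_def by (auto simp: Gr_char)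

lemma L_p: "t \<in> U ex_prog Omic \<Longrightarrow> App pC t \<in> GL GG J \<longleftrightarrow> t \<in> GL GG J"
  by (subst memL) (auto simp: memF)
lemma L_q: "t \<in> U ex_prog Omic \<Longrightarrow> App qC t \<in> GL GG J \<longleftrightarrow> App wC t \<notin> J"
  by (subst memL) (auto simp: memF)
lemma L_w: "t \<in> U ex_prog Omic \<Longrightarrow> App wC t \<in> GL GG J \<longleftrightarrow> t \<notin> J"
  by (subst memL) (auto simp: memF)
lemma L_sq: "App sC qC \<in> GL GG J \<longleftrightarrow> App qC (App sC qC) \<in> GL GG J"
  by (subst memL) (auto simp: memF inU)
lemma L_sp: "App sC pC \<notin> GL GG J"
proof -
  have "GL GG J \<subseteq> UNIV - {App sC pC, App pC (App sC pC)}"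
    by (rule GL_lower) (auto simp: memF)
  then show ?thesis by blast
qed

lemma sqU: "App sC qC \<in> U ex_prog Omic" using inU UO_app by blast

lemma T_sq: "App sC qC \<notin> wf_true GG" "App wC (App sC qC) \<notin> wf_true GG"
proof -
  let ?S = "UNIV - {App sC qC, App wC (App sC qC)}"
  have w1: "App wC (App sC qC) \<in> GL GG ?S" using L_w[OF sqU, of ?S] by simp
  have s1: "App sC qC \<in> GL GG ?S" using L_sq[of ?S] L_q[OF sqU, of ?S] by simp
  have "GL GG (GL GG ?S) \<subseteq> ?S"
  proof
    fix x assume x: "x \<in> GL GG (GL GG ?S)"
    have "x \<noteq> App sC qC" using x L_sq[of "GL GG ?S"] L_q[OF sqU, of "GL GG ?S"] w1 by blast
    moreover have "x \<noteq> App wC (App sC qC)" using x L_w[OF sqU, of "GL GG ?S"] s1 by blast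
    ultimately show "x \<in> ?S" by auto
  qed
  then have "wf_true GG \<subseteq> ?S" by (rule wf_true_lower)
  then show "App sC qC \<notin> wf_true GG" "App wC (App sC qC) \<notin> wf_true GG" by auto
qed

lemma T_unf: "wf_true GG = GL GG (wf_nonfalse GG)" by (rule wf_true_unfold)
lemma N_unf: "wf_nonfalse GG = GL GG (wf_true GG)" unfolding wf_nonfalse_def ..

lemma v_p: "t \<in> U ex_prog Omic \<Longrightarrow> MP_val ex_prog (App pC t) = MP_val ex_prog t"
proof -
  assume t: "t \<in> U ex_prog Omic"
  have a: "App pC t \<in> wf_true GG \<longleftrightarrow> t \<in> wf_true GG"
    using L_p[OF t, of "wf_nonfalse GG"] unfolding T_unf[symmetric] .
  have b: "App pC t \<in> wf_nonfalse GG \<longleftrightarrow> t \<in> wf_nonfalse GG"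
    using L_p[OF t, of "wf_true GG"] unfolding N_unf[symmetric] .
  show ?thesis unfolding MP_val_def wf_val_def using a b by simp
qed

lemma v_q: "t \<in> U ex_prog Omic \<Longrightarrow> MP_val ex_prog (App qC t) = MP_val ex_prog t"
proof -
  assume t: "t \<in> U ex_prog Omic"
  have a1: "App qC t \<in> wf_true GG \<longleftrightarrow> App wC t \<notin> wf_nonfalse GG"
    using L_q[OF t, of "wf_nonfalse GG"] unfolding T_unf[symmetric] .
  have a2: "App wC t \<in> wf_nonfalse GG \<longleftrightarrow> t \<notin> wf_true GG"
    using L_w[OF t, of "wf_true GG"] unfolding N_unf[symmetric] .
  have b1: "App qC t \<in> wf_nonfalse GG \<longleftrightarrow> App wC t \<notin> wf_true GG"
    using L_q[OF t, of "wf_true GG"] unfolding N_unf[symmetric] .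
  have b2: "App wC t \<in> wf_true GG \<longleftrightarrow> t \<notin> wf_nonfalse GG"
    using L_w[OF t, of "wf_nonfalse GG"] unfolding T_unf[symmetric] .
  show ?thesis unfolding MP_val_def wf_val_def using a1 a2 b1 b2 by simp
qed

lemma v_sp: "MP_val ex_prog (App sC pC) = FalseV"
proof -
  have "App sC pC \<notin> wf_true GG"
    using L_sp[of "wf_nonfalse GG"] unfolding T_unf[symmetric] .
  moreover have "App sC pC \<notin> wf_nonfalse GG"
    using L_sp[of "wf_true GG"] unfolding N_unf[symmetric] .
  ultimately show ?thesis unfolding MP_val_def wf_val_def by simp
qed

lemma v_sq: "MP_val ex_prog (App sC qC) = ZeroV"
proof -
  have "App sC qC \<in> GL GG (wf_true GG)"
    using L_sq L_q[OF sqU] T_sq(2) by blast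
  then have "App sC qC \<in> wf_nonfalse GG" unfolding N_unf[symmetric] .
  then show ?thesis unfolding MP_val_def wf_val_def using T_sq(1) by simp
qed

theorem lemma1:
  shows "\<not> extensional ex_prog (MP_val ex_prog)"
proof
  assume E: "extensional ex_prog (MP_val ex_prog)"
  have at: "arg_ty (Arrow oo Omic)"
    by (rule pred_ty_arg_ty.intros(4), rule pred_ty_arg_ty.intros(2), rule pred_ty_arg_ty.intros(4), rule pred_ty_arg_ty.intros(2), rule pred_ty_arg_ty.intros(4), rule pred_ty_arg_ty.intros(1), rule pred_ty_arg_ty.intros(1), rule pred_ty_arg_ty.intros(1))
  have "ext_eq ex_prog (MP_val ex_prog) (Arrow oo Omic) sC sC"
    using E at inU(1) unfolding extensional_def by blast
  then have H: "\<And>e e'. e \<in> U ex_prog oo \<Longrightarrow> e' \<in> U ex_prog oo \<Longrightarrow>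
      ext_eq ex_prog (MP_val ex_prog) oo e e' \<Longrightarrow>
      MP_val ex_prog (App sC e) = MP_val ex_prog (App sC e')"
    by (simp only: ext_eq.simps(3) ext_eq.simps(2))
  have "ext_eq ex_prog (MP_val ex_prog) oo pC qC"
    unfolding ext_eq.simps(3) ext_eq.simps(2)
    using v_p v_q by metis
  then have "MP_val ex_prog (App sC pC) = MP_val ex_prog (App sC qC)"
    using H inU(2,3) by blast
  then show False using v_sp v_sq by simp
qed

end
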